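(* Let $G=(V,E,C,\ell)$ be an edge-labeled hypergraph with maximum hyperedge size $r$. Construct an undirected weighted graph $G'$ on node set $V'=V\cup\{v_c: c\in C\}$ (one new terminal node per category) as follows: for each hyperedge $e\in E$, add a clique on the nodes of $e$ together with the terminal $v_{\ell(e)}$, each clique edge having weight $1/|e|$; weights of overlapping edges are added. For a clustering $Y:V\to C$, let $\mathrm{MultiwayCut}(Y)$ be the total weight of edges of $G'$ whose endpoints lie in different parts of the partition of $V'$ into the $|C|$ sets $\{v_c\}\cup Y^{-1}(c)$, $c\in C$. Then for every clustering $Y$, \[ \mathrm{CatEdgeClus}(Y)\le \mathrm{MultiwayCut}(Y)\le \frac{r+1}{2}\,\mathrm{CatEdgeClus}(Y). \]
   Context: An edge-labeled hypergraph $G=(V,E,C,\ell)$ consists of a finite node set $V$, a finite collection $E$ of hyperedges (nonempty subsets of $V$), a finite set $C$ of categories, and a labeling $\ell:E\to C$. A clustering is a map $Y:V\to C$. For $e\in E$, $m_Y(e)=1$ if $Y[i]\neq\ell(e)$ for some $i\in e$, and $m_Y(e)=0$ otherwise; $\mathrm{CatEdgeClus}(Y)=\sum_{e\in E}m_Y(e)$. *)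

theory Defs
  imports Complex_Main
begin

text \<open>Edge-labeled hypergraph: node set V, hyperedge index set E (so repeated
hyperedges are allowed), hyperedge map hedge, categories C, labels lab.\<close>

definition is_edge_labeled_hypergraph ::
  "'v set \<Rightarrow> 'e set \<Rightarrow> ('e \<Rightarrow> 'v set) \<Rightarrow> 'c set \<Rightarrow> ('e \<Rightarrow> 'c) \<Rightarrow> bool" where
  "is_edge_labeled_hypergraph V E hedge C lab \<longleftrightarrow>
     finite V \<and> finite E \<and> finite C \<and>
     (\<forall>e\<in>E. hedge e \<noteq> {} \<and> hedge e \<subseteq> V \<and> lab e \<in> C)"

definition is_clustering :: "'v set \<Rightarrow> 'c set \<Rightarrow> ('v \<Rightarrow> 'c) \<Rightarrow> bool" where
  "is_clustering V C Y \<longleftrightarrow> (\<forall>v\<in>V. Y v \<in> C)"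

definition mistake :: "('e \<Rightarrow> 'v set) \<Rightarrow> ('e \<Rightarrow> 'c) \<Rightarrow> ('v \<Rightarrow> 'c) \<Rightarrow> 'e \<Rightarrow> nat" where
  "mistake hedge lab Y e = (if \<exists>i\<in>hedge e. Y i \<noteq> lab e then 1 else 0)"

definition CatEdgeClus ::
  "'e set \<Rightarrow> ('e \<Rightarrow> 'v set) \<Rightarrow> ('e \<Rightarrow> 'c) \<Rightarrow> ('v \<Rightarrow> 'c) \<Rightarrow> nat" where
  "CatEdgeClus E hedge lab Y = (\<Sum>e\<in>E. mistake hedge lab Y e)"

text \<open>Graph G': node set V' = Inl ` V \<union> Inr ` C (Inr c is the terminal v_c).\<close>

definition node_set' :: "'v set \<Rightarrow> 'c set \<Rightarrow> ('v + 'c) set" where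
  "node_set' V C = Inl ` V \<union> Inr ` C"

definition clique_nodes :: "('e \<Rightarrow> 'v set) \<Rightarrow> ('e \<Rightarrow> 'c) \<Rightarrow> 'e \<Rightarrow> ('v + 'c) set" where
  "clique_nodes hedge lab e = Inl ` hedge e \<union> {Inr (lab e)}"

definition weight' :: "'e set \<Rightarrow> ('e \<Rightarrow> 'v set) \<Rightarrow> ('e \<Rightarrow> 'c) \<Rightarrow> ('v + 'c) set \<Rightarrow> real" where
  "weight' E hedge lab p =
     (\<Sum>e\<in>E. if p \<subseteq> clique_nodes hedge lab e then 1 / real (card (hedge e)) else 0)"

fun part' :: "('v \<Rightarrow> 'c) \<Rightarrow> ('v + 'c) \<Rightarrow> 'c" where
  "part' Y (Inl v) = Y v"
| "part' Y (Inr c) = c"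

definition cut_pairs :: "'v set \<Rightarrow> 'c set \<Rightarrow> ('v \<Rightarrow> 'c) \<Rightarrow> ('v + 'c) set set" where
  "cut_pairs V C Y = {{x, y} | x y. x \<in> node_set' V C \<and> y \<in> node_set' V C \<and> x \<noteq> y
                                  \<and> part' Y x \<noteq> part' Y y}"

definition MultiwayCut ::
  "'v set \<Rightarrow> 'e set \<Rightarrow> ('e \<Rightarrow> 'v set) \<Rightarrow> 'c set \<Rightarrow> ('e \<Rightarrow> 'c) \<Rightarrow> ('v \<Rightarrow> 'c) \<Rightarrow> real" where
  "MultiwayCut V E hedge C lab Y = (\<Sum>p\<in>cut_pairs V C Y. weight' E hedge lab p)"

end

theory Submission
  imports Defs
begin

lemma card_K:
  fixes hedge :: "'e \<Rightarrow> 'v set" and lab :: "'e \<Rightarrow> 'c"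
  assumes "finite (hedge e)"
  shows "card (clique_nodes hedge lab e) = card (hedge e) + 1"
proof -
  have "card (Inl ` hedge e :: ('v + 'c) set) = card (hedge e)"
    by (simp add: card_image)
  moreover have "Inr (lab e) \<notin> (Inl ` hedge e :: ('v + 'c) set)" by auto
  ultimately show ?thesis unfolding clique_nodes_def using assms by simp
qed

lemma per_edge:
  fixes V :: "'v set" and C :: "'c set"
  assumes fin: "finite V" "finite C" and sub: "hedge e \<subseteq> V" and ne: "hedge e \<noteq> {}"
    and lc: "lab e \<in> C" and cl: "\<forall>v\<in>V. Y v \<in> C" and kr: "card (hedge e) \<le> r"
  defines "P \<equiv> {p \<in> cut_pairs V C Y. p \<subseteq> clique_nodes hedge lab e}"
  shows "real (mistake hedge lab Y e) \<le> real (card P) / real (card (hedge e))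
     \<and> real (card P) / real (card (hedge e)) \<le> (real r + 1) / 2 * real (mistake hedge lab Y e)"
proof -
  let ?K = "clique_nodes hedge lab e"
  have fe: "finite (hedge e)" using fin sub finite_subset by blast
  have kpos: "card (hedge e) > 0" using fe ne by (simp add: card_gt_0_iff)
  have finK: "finite ?K" using fe unfolding clique_nodes_def by simp
  have cK: "card ?K = card (hedge e) + 1" using card_K[of hedge e lab, OF fe] by simp
  show ?thesis
  proof (cases "\<exists>i\<in>hedge e. Y i \<noteq> lab e")
    case False
    have "P = {}"
    proof (rule ccontr)
      assume "P \<noteq> {}"
      then obtain p where "p \<in> P" by blast
      then obtain x y where "p = {x,y}" "part' Y x \<noteq> part' Y y" "x \<in> ?K" "y \<in> ?K"
        unfolding P_def cut_pairs_def by auto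
      then show False using False unfolding clique_nodes_def by auto
    qed
    then show ?thesis using False by (simp add: mistake_def)
  next
    case True
    then obtain i where i: "i \<in> hedge e" "Y i \<noteq> lab e" by blast
    have m: "mistake hedge lab Y e = 1" using True by (simp add: mistake_def)
    define f where "f v = (if Y v \<noteq> lab e then {Inl v, Inr (lab e)} else {Inl v, Inl i})"
      for v :: 'v
    have KV: "?K \<subseteq> node_set' V C" using sub lc unfolding clique_nodes_def node_set'_def by auto
    have fP: "f ` hedge e \<subseteq> P"
    proof
      fix p assume "p \<in> f ` hedge e"
      then obtain v where v: "v \<in> hedge e" "p = f v" by blast
      show "p \<in> P"
      proof (cases "Y v \<noteq> lab e")
        case True
        then have "p = {Inl v, Inr (lab e)}" using v f_def by simp
        moreover have "Inl v \<in> ?K" "Inr (lab e) \<in> ?K" using v unfolding clique_nodes_def by auto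
        ultimately show ?thesis using KV True unfolding P_def cut_pairs_def by force
      next
        case False
        then have "p = {Inl v, Inl i}" using v f_def by simp
        moreover have "Inl v \<in> ?K" "Inl i \<in> ?K" using v i unfolding clique_nodes_def by auto
        moreover have "v \<noteq> i" using False i by auto
        ultimately show ?thesis using KV False i unfolding P_def cut_pairs_def by force
      qed
    qed
    have inj: "inj_on f (hedge e)"
    proof
      fix a b assume ab: "a \<in> hedge e" "b \<in> hedge e" "f a = f b"
      show "a = b"
      proof (cases "Y a \<noteq> lab e")
        case True
        show ?thesis
        proof (cases "Y b \<noteq> lab e")
          case True
          then show ?thesis using ab \<open>Y a \<noteq> lab e\<close> unfolding f_def by (auto simp: doubleton_eq_iff)
        next
          case False
          then show ?thesis using ab \<open>Y a \<noteq> lab e\<close> unfolding f_def by (auto simp: doubleton_eq_iff)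
        qed
      next
        case False
        show ?thesis
        proof (cases "Y b \<noteq> lab e")
          case True
          then show ?thesis using ab False unfolding f_def by (auto simp: doubleton_eq_iff)
        next
          case F2: False
          then show ?thesis using ab False i unfolding f_def by (auto simp: doubleton_eq_iff)
        qed
      qed
    qed
    have PS: "P \<subseteq> {B. B \<subseteq> ?K \<and> card B = 2}"
      unfolding P_def cut_pairs_def by auto
    have finS: "finite {B. B \<subseteq> ?K \<and> card B = 2}" using finK by simp
    have finP: "finite P" using finite_subset[OF PS finS] .
    have lo: "card (hedge e) \<le> card P"
      using card_inj_on_le[OF inj fP finP] .
    have "card P \<le> card ?K choose 2"
      using card_mono[OF finS PS] n_subsets[OF finK] by simp
    then have "card P \<le> (card (hedge e) + 1) choose 2" using cK by simp
    also have "\<dots> = (card (hedge e) + 1) * card (hedge e) div 2"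
      by (simp add: choose_two)
    finally have up: "2 * card P \<le> (card (hedge e) + 1) * card (hedge e)" by simp
    have "real (2 * card P) \<le> real ((card (hedge e) + 1) * card (hedge e))"
      using up by linarith
    then have up2: "2 * real (card P) \<le> (real (card (hedge e)) + 1) * real (card (hedge e))"
      by (simp only: of_nat_mult of_nat_add of_nat_1 of_nat_numeral)
    have kr': "real (card (hedge e)) \<le> real r" using kr by simp
    have kp: "real (card (hedge e)) > 0" using kpos by simp
    have "real (card P) \<le> (real r + 1) / 2 * real (card (hedge e))"
    proof -
      have "(real (card (hedge e)) + 1) * real (card (hedge e)) \<le> (real r + 1) * real (card (hedge e))"
        using kr' kp by (intro mult_right_mono) auto
      then show ?thesis using up2 by simp
    qed
    then have u: "real (card P) / real (card (hedge e)) \<le> (real r + 1) / 2"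
      using kp by (simp add: divide_le_eq)
    have l: "1 \<le> real (card P) / real (card (hedge e))"
      using lo kp by (simp add: le_divide_eq)
    show ?thesis using m u l by simp
  qed
qed

theorem mainTheorem7:
  fixes V :: "'v set" and E :: "'e set" and hedge :: "'e \<Rightarrow> 'v set"
    and C :: "'c set" and lab :: "'e \<Rightarrow> 'c" and Y :: "'v \<Rightarrow> 'c" and r :: nat
  assumes "is_edge_labeled_hypergraph V E hedge C lab"
    and "r = Max ((\<lambda>e. card (hedge e)) ` E)"
    and "is_clustering V C Y"
  shows "real (CatEdgeClus E hedge lab Y) \<le> MultiwayCut V E hedge C lab Y
       \<and> MultiwayCut V E hedge C lab Y \<le> (real r + 1) / 2 * real (CatEdgeClus E hedge lab Y)"
proof -
  have H: "finite V" "finite E" "finite C" "\<And>e. e \<in> E \<Longrightarrow> hedge e \<noteq> {} \<and> hedge e \<subseteq> V \<and> lab e \<in> C"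
    using assms(1) unfolding is_edge_labeled_hypergraph_def by auto
  have cl: "\<forall>v\<in>V. Y v \<in> C" using assms(3) unfolding is_clustering_def .
  let ?CP = "cut_pairs V C Y"
  let ?P = "\<lambda>e. {p \<in> ?CP. p \<subseteq> clique_nodes hedge lab e}"
  have finN: "finite (node_set' V C)" using H unfolding node_set'_def by simp
  have "?CP \<subseteq> Pow (node_set' V C)" unfolding cut_pairs_def by auto
  then have finCP: "finite ?CP" using finN finite_subset by (metis finite_Pow_iff)
  have MW: "MultiwayCut V E hedge C lab Y = (\<Sum>e\<in>E. real (card (?P e)) / real (card (hedge e)))"
  proof -
    have "MultiwayCut V E hedge C lab Y = (\<Sum>p\<in>?CP. \<Sum>e\<in>E.
       (if p \<subseteq> clique_nodes hedge lab e then 1 / real (card (hedge e)) else 0))"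
      unfolding MultiwayCut_def weight'_def by simp
    also have "\<dots> = (\<Sum>e\<in>E. \<Sum>p\<in>?CP.
       (if p \<subseteq> clique_nodes hedge lab e then 1 / real (card (hedge e)) else 0))"
      by (rule sum.swap)
    also have "\<dots> = (\<Sum>e\<in>E. real (card (?P e)) / real (card (hedge e)))"
      by (intro sum.cong refl) (simp only: sum.inter_filter[OF finCP, symmetric] sum_constant, simp)
    finally show ?thesis .
  qed
  have CE: "real (CatEdgeClus E hedge lab Y) = (\<Sum>e\<in>E. real (mistake hedge lab Y e))"
    unfolding CatEdgeClus_def by simp
  have kr: "\<And>e. e \<in> E \<Longrightarrow> card (hedge e) \<le> r"
    using assms(2) H(2) by simp
  have pe: "\<And>e. e \<in> E \<Longrightarrow> real (mistake hedge lab Y e) \<le> real (card (?P e)) / real (card (hedge e))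
     \<and> real (card (?P e)) / real (card (hedge e)) \<le> (real r + 1) / 2 * real (mistake hedge lab Y e)"
  proof -
    fix e assume e: "e \<in> E"
    have h4: "hedge e \<noteq> {}" "hedge e \<subseteq> V" "lab e \<in> C" using H(4)[OF e] by auto
    show "?thesis e" by (rule per_edge[where hedge=hedge and e=e and lab=lab, OF H(1) H(3) h4(2) h4(1) h4(3) cl kr[OF e]])
  qed
  have 1: "real (CatEdgeClus E hedge lab Y) \<le> MultiwayCut V E hedge C lab Y"
    unfolding CE MW by (rule sum_mono) (rule conjunct1[OF pe])
  have 2: "MultiwayCut V E hedge C lab Y \<le> (real r + 1) / 2 * real (CatEdgeClus E hedge lab Y)"
    unfolding CE MW sum_distrib_left by (rule sum_mono) (rule conjunct2[OF pe])
  show ?thesis using 1 2 by blast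
qed

end
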